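(* Let $n\ge4$ and $\lambda=(n-2,2)$, and let $m=\lfloor (n-1)/2\rfloor$. Then $P(\lambda)\setminus\{0\}$, the poset on the elements $\{1,2,\dots,n-2\}$, is as follows: its minimal elements are $\{1,2,\dots,m\}$, its maximal elements are $\{m+1,\dots,n-2\}$, and its cover relations are exactly that for each $j$ with $1\le j\le n-2-m$, the maximal element $m+j$ covers each of $j,j+1,\dots,m$ (and there are no other strict relations).
   Context: For a vector $\lambda=(\lambda_1,\dots,\lambda_d)$ of positive integers with sum $n\ge2$, let $\Delta_\lambda=\mathrm{conv}(e_1,\dots,e_d,\lambda)\subset\mathbb{R}^d$ with fundamental parallelepiped $\Pi_\lambda=\{\sum_{i=1}^d\gamma_i(1,e_i)+\gamma_{d+1}(1,\lambda):0\le\gamma_i<1\}\subset\mathbb{R}^{d+1}$. The poset $P(\lambda)$ is $\Pi_\lambda\cap\mathbb{Z}^{d+1}$ ordered by $\sigma\preceq\mu$ iff $\mu-\sigma\in\Pi_\lambda\cap\mathbb{Z}^{d+1}$; $0$ is its minimum. For $0\le b<n-1$ set $p(b)=\left(\sum_{t}\lceil b\lambda_t/(n-1)\rceil-b,\ \lceil b\lambda_1/(n-1)\rceil,\dots,\lceil b\lambda_d/(n-1)\rceil\right)$; $b\mapsto p(b)$ is a bijection from $\{0,\dots,n-2\}$ onto $\Pi_\lambda\cap\mathbb{Z}^{d+1}$, and each integer $b$ is identified with $p(b)$ (so $0$ corresponds to the origin). *)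

theory Defs
  imports Complex_Main
begin

(* Vectors in Z^{d+1} / R^{d+1} are represented as functions on nat with
   coordinates 0..d (coordinate 0 is the extra "height" coordinate) and
   value 0 at all indices > d.  lam is indexed by 1..d. *)

definition gen :: "nat \<Rightarrow> (nat \<Rightarrow> int) \<Rightarrow> nat \<Rightarrow> nat \<Rightarrow> int" where
  "gen d lam i k = (if k = 0 then 1
                    else if i \<le> d then (if k = i then 1 else 0)
                    else lam k)"

definition in_Pi :: "nat \<Rightarrow> (nat \<Rightarrow> int) \<Rightarrow> (nat \<Rightarrow> int) \<Rightarrow> bool" where
  "in_Pi d lam x \<longleftrightarrow>
     (\<forall>k>d. x k = 0) \<and>
     (\<exists>\<gamma>::nat \<Rightarrow> real. (\<forall>i\<in>{1..d+1}. 0 \<le> \<gamma> i \<and> \<gamma> i < 1) \<and>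
        (\<forall>k\<le>d. real_of_int (x k) = (\<Sum>i=1..d+1. \<gamma> i * real_of_int (gen d lam i k))))"

definition Pset :: "nat \<Rightarrow> (nat \<Rightarrow> int) \<Rightarrow> (nat \<Rightarrow> int) set" where
  "Pset d lam = {x. in_Pi d lam x}"

definition Ple :: "nat \<Rightarrow> (nat \<Rightarrow> int) \<Rightarrow> (nat \<Rightarrow> int) \<Rightarrow> (nat \<Rightarrow> int) \<Rightarrow> bool" where
  "Ple d lam \<sigma> \<mu> \<longleftrightarrow> in_Pi d lam \<sigma> \<and> in_Pi d lam \<mu> \<and> in_Pi d lam (\<lambda>k. \<mu> k - \<sigma> k)"

definition Plt :: "nat \<Rightarrow> (nat \<Rightarrow> int) \<Rightarrow> (nat \<Rightarrow> int) \<Rightarrow> (nat \<Rightarrow> int) \<Rightarrow> bool" where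
  "Plt d lam \<sigma> \<mu> \<longleftrightarrow> Ple d lam \<sigma> \<mu> \<and> \<sigma> \<noteq> \<mu>"

definition Pcovers_in :: "nat \<Rightarrow> (nat \<Rightarrow> int) \<Rightarrow> (nat \<Rightarrow> int) set \<Rightarrow> (nat \<Rightarrow> int) \<Rightarrow> (nat \<Rightarrow> int) \<Rightarrow> bool" where
  "Pcovers_in d lam S \<sigma> \<mu> \<longleftrightarrow> \<sigma> \<in> S \<and> \<mu> \<in> S \<and> Plt d lam \<sigma> \<mu> \<and>
      \<not> (\<exists>\<tau>\<in>S. Plt d lam \<sigma> \<tau> \<and> Plt d lam \<tau> \<mu>)"

definition pt :: "nat \<Rightarrow> (nat \<Rightarrow> int) \<Rightarrow> nat \<Rightarrow> nat \<Rightarrow> int" where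
  "pt d lam b k = (let n = (\<Sum>t=1..d. lam t) in
     if k = 0 then (\<Sum>t=1..d. \<lceil>real b * real_of_int (lam t) / real_of_int (n - 1)\<rceil>) - int b
     else if k \<le> d then \<lceil>real b * real_of_int (lam k) / real_of_int (n - 1)\<rceil>
     else 0)"

end

theory Submission imports Defs begin


definition L :: "nat \<Rightarrow> nat \<Rightarrow> int" where
  "L n = (\<lambda>k::nat. if k = 1 then int n - 2 else 2)"

definition hh :: "nat \<Rightarrow> nat \<Rightarrow> int" where
  "hh n b = (if b = 0 then 0 else if 2*b \<le> n-1 then 1 else 2)"

definition Q :: "nat \<Rightarrow> nat \<Rightarrow> nat \<Rightarrow> int" where
  "Q n b = (\<lambda>k. if k=0 then hh n b else if k=1 then int b else if k=2 then hh n b else 0)"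

lemma sum13: "(\<Sum>i=1..3. f i) = f (1::nat) + f 2 + f 3"
proof -
  have "{1..3::nat} = {1,2,3}" by auto
  then show ?thesis by (simp add: add.assoc)
qed

lemma hh_ceil:
  assumes "n \<ge> 4" "b \<le> n-2"
  shows "\<lceil>real b * 2 / (real n - 1)\<rceil> = hh n b"
proof -
  have N: "real n - 1 > 0" using assms by simp
  show ?thesis
  proof (cases "b = 0")
    case True then show ?thesis by (simp add: hh_def)
  next
    case b0: False
    show ?thesis
    proof (cases "2*b \<le> n-1")
      case True
      have "real (2*b) \<le> real (n-1)" using True by linarith
      then have "real b * 2 \<le> real n - 1" using assms by (simp add: of_nat_diff)
      moreover have "real b \<ge> 1" using b0 by simp
      ultimately have "1 - 1 < real b * 2 / (real n - 1)" "real b * 2 / (real n - 1) \<le> 1"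
        using N by (simp_all add: field_simps)
      then have "\<lceil>real b * 2 / (real n - 1)\<rceil> = 1" by (intro ceiling_unique) simp_all
      then show ?thesis using True b0 by (simp add: hh_def)
    next
      case False
      have "real (2*b) > real (n-1)" using False by linarith
      then have "real b * 2 > real n - 1" using assms by (simp add: of_nat_diff)
      moreover have "real b \<le> real n - 2" using assms by (simp add: of_nat_diff)
      ultimately have "2 - 1 < real b * 2 / (real n - 1)" "real b * 2 / (real n - 1) \<le> 2"
        using N by (simp_all add: field_simps)
      then have "\<lceil>real b * 2 / (real n - 1)\<rceil> = 2" by (intro ceiling_unique) simp_all
      then show ?thesis using False b0 by (simp add: hh_def)
    qed
  qed
qed

lemma b_ceil:
  assumes "n \<ge> 4" "b \<le> n-2"
  shows "\<lceil>real b * (real n - 2) / (real n - 1)\<rceil> = int b"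
proof -
  have N: "real n - 1 > 0" using assms by simp
  have "real b \<le> real n - 2" using assms by (simp add: of_nat_diff)
  then have "real b - 1 < real b * (real n - 2) / (real n - 1)" "real b * (real n - 2) / (real n - 1) \<le> real b"
    using N by (simp_all add: field_simps)
  then show ?thesis by (intro ceiling_unique) simp_all
qed

lemma pt_eq:
  assumes "n \<ge> 4" "b \<le> n-2"
  shows "pt 2 (L n) b = Q n b"
proof -
  have s: "(\<Sum>t=1..2. L n t) = int n" by (simp add: L_def numeral_2_eq_2)
  have c1: "real_of_int (int n - 1) = real n - 1" using assms by simp
  have c2: "real_of_int (int n - 2) = real n - 2" using assms by simp
  show ?thesis
    using hh_ceil[OF assms] b_ceil[OF assms]
    by (auto simp: pt_def Let_def s c1 c2 Q_def L_def numeral_2_eq_2 hh_def split: if_splits)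
qed

lemma sum13': "(\<Sum>i=1..2+1. f i) = f (1::nat) + f 2 + f 3"
  using sum13 by simp

lemma gen_vals:
  "gen 2 (L n) 1 0 = 1" "gen 2 (L n) 1 1 = 1" "gen 2 (L n) 1 2 = 0"
  "gen 2 (L n) 2 0 = 1" "gen 2 (L n) 2 1 = 0" "gen 2 (L n) 2 2 = 1"
  "gen 2 (L n) 3 0 = 1" "gen 2 (L n) 3 1 = int n - 2" "gen 2 (L n) 3 2 = 2"
  by (simp_all add: gen_def L_def)

lemma le2: "(k::nat) \<le> 2 \<longleftrightarrow> k = 0 \<or> k = 1 \<or> k = 2" by auto

lemma in_Pi_iff:
  assumes "n \<ge> 4"
  shows "in_Pi 2 (L n) x \<longleftrightarrow> (\<exists>b\<le>n-2. x = Q n b)"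
proof
  assume "in_Pi 2 (L n) x"
  then obtain g :: "nat \<Rightarrow> real" where z: "\<forall>k>2. x k = 0"
    and gr: "\<forall>i\<in>{1..2+1}. 0 \<le> g i \<and> g i < 1"
    and ge: "\<forall>k\<le>2. real_of_int (x k) = (\<Sum>i=1..2+1. g i * real_of_int (gen 2 (L n) i k))"
    unfolding in_Pi_def by blast
  have g1: "0 \<le> g 1" "g 1 < 1" and g2: "0 \<le> g 2" "g 2 < 1" and g3: "0 \<le> g 3" "g 3 < 1"
    using gr by auto
  have e0: "real_of_int (x 0) = g 1 + g 2 + g 3" using ge[rule_format, of 0, unfolded sum13'] by (simp add: gen_def L_def)
  have e1: "real_of_int (x 1) = g 1 + g 3 * (real n - 2)" using ge[rule_format, of 1, unfolded sum13'] assms by (simp add: gen_def L_def)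
  have e2: "real_of_int (x 2) = g 2 + 2 * g 3" using ge[rule_format, of 2, unfolded sum13'] by (simp add: gen_def L_def)
  define B where "B = x 1 + x 2 - x 0"
  have N: "real n - 1 > 0" using assms by simp
  have RB: "real_of_int B = g 3 * (real n - 1)" unfolding B_def using e0 e1 e2 by (simp add: algebra_simps)
  have B0: "B \<ge> 0" using RB g3 N by (smt (verit) mult_nonneg_nonneg of_int_0_le_iff)
  have "real_of_int B < real n - 1" using RB g3 N by (simp add: mult_less_cancel_right1)
  then have "B < int n - 1" by linarith
  then have Bn: "nat B \<le> n - 2" using assms by linarith
  have g3B: "g 3 = real_of_int B / (real n - 1)" using RB N by (simp add: field_simps)
  have "real_of_int (x 1 - B) = g 1 - g 3" using e1 RB by (simp add: algebra_simps)
  then have "\<bar>real_of_int (x 1 - B)\<bar> < 1" using g1 g3 by simp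
  then have "\<bar>x 1 - B\<bar> < 1" by linarith
  then have x1: "x 1 = B" by simp
  have x2: "x 2 = hh n (nat B)"
  proof -
    have c: "\<lceil>real (nat B) * 2 / (real n - 1)\<rceil> = hh n (nat B)" using hh_ceil[OF assms Bn] .
    have "real (nat B) = real_of_int B" using B0 by simp
    then have "real (nat B) * 2 / (real n - 1) = 2 * g 3" using g3B by simp
    then have "\<lceil>2 * g 3\<rceil> = x 2"
      using e2 g2 by (intro ceiling_unique) linarith+
    then show ?thesis using c \<open>real (nat B) * 2 / (real n - 1) = 2 * g 3\<close> by simp
  qed
  have x0: "x 0 = hh n (nat B)" using x1 x2 B_def by linarith
  have "x = Q n (nat B)"
  proof
    fix k show "x k = Q n (nat B) k"
      using z x0 x1 x2 B0 by (cases "k = 0 \<or> k = 1 \<or> k = 2") (auto simp: Q_def)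
  qed
  then show "\<exists>b\<le>n-2. x = Q n b" using Bn by blast
next
  assume "\<exists>b\<le>n-2. x = Q n b"
  then obtain b where b: "b \<le> n-2" and x: "x = Q n b" by blast
  have N: "real n - 1 > 0" using assms by simp
  define t where "t = real b / (real n - 1)"
  define g where "g = (\<lambda>i::nat. if i = 2 then real_of_int (hh n b) - 2 * t else t)"
  have c: "\<lceil>2 * t\<rceil> = hh n b" using hh_ceil[OF assms b] unfolding t_def by (simp add: mult.commute)
  have t0: "0 \<le> t" and t1: "t < 1" using N b assms unfolding t_def by (simp_all add: field_simps of_nat_diff)
  have "0 \<le> g 2" "g 2 < 1" using c ceiling_correct[of "2*t"] unfolding g_def by simp_all
  then have gr: "\<forall>i\<in>{1..2+1}. 0 \<le> g i \<and> g i < 1" using t0 t1 by (auto simp: g_def)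
  have tb: "t * (real n - 1) = real b" unfolding t_def using N by simp
  have q0: "real_of_int (x 0) = g 1 + g 2 + g 3" by (simp add: x Q_def g_def)
  have q1: "real_of_int (x 1) = g 1 + g 3 * (real n - 2)"
  proof -
    have "g 1 + g 3 * (real n - 2) = t * (real n - 1)" by (simp add: g_def algebra_simps)
    then show ?thesis using tb by (simp add: x Q_def)
  qed
  have q2: "real_of_int (x 2) = g 2 + 2 * g 3" by (simp add: x Q_def g_def)
  have "\<forall>k\<le>2. real_of_int (x k) = (\<Sum>i=1..2+1. g i * real_of_int (gen 2 (L n) i k))"
    unfolding le2 sum13' using assms q0 q1 q2 by (simp add: gen_def L_def)
  moreover have "\<forall>k>2. x k = 0" by (simp add: x Q_def)
  ultimately show "in_Pi 2 (L n) x" unfolding in_Pi_def using gr by blast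
qed



lemma Q_inj: "Q n b = Q n c \<Longrightarrow> b = c"
  by (drule fun_cong[where x=1]) (simp add: Q_def)

lemma Q0: "Q n 0 = (\<lambda>k. 0)" by (auto simp: Q_def hh_def)

lemma Ple_iff:
  assumes "n \<ge> 4" "b \<le> n-2" "c \<le> n-2"
  shows "Ple 2 (L n) (Q n b) (Q n c) \<longleftrightarrow> b \<le> c \<and> hh n c - hh n b = hh n (c-b)"
proof
  assume "Ple 2 (L n) (Q n b) (Q n c)"
  then have "in_Pi 2 (L n) (\<lambda>k. Q n c k - Q n b k)" by (simp add: Ple_def)
  then obtain e where e: "e \<le> n-2" "(\<lambda>k. Q n c k - Q n b k) = Q n e"
    using in_Pi_iff[OF assms(1)] by blast
  have h1: "int c - int b = int e" using fun_cong[OF e(2), of 1] by (simp add: Q_def)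
  have h2: "hh n c - hh n b = hh n e" using fun_cong[OF e(2), of 2] by (simp add: Q_def)
  have "b \<le> c" "e = c - b" using h1 by linarith+
  then show "b \<le> c \<and> hh n c - hh n b = hh n (c-b)" using h2 by simp
next
  assume a: "b \<le> c \<and> hh n c - hh n b = hh n (c-b)"
  have "(\<lambda>k. Q n c k - Q n b k) = Q n (c-b)"
  proof
    fix k show "Q n c k - Q n b k = Q n (c - b) k" using a by (simp add: Q_def of_nat_diff)
  qed
  moreover have "c - b \<le> n-2" using assms by simp
  ultimately show "Ple 2 (L n) (Q n b) (Q n c)"
    unfolding Ple_def using in_Pi_iff[OF assms(1)] assms by blast
qed

lemma hh_alt: "hh n x = (if x = 0 then 0 else if x \<le> (n-1) div 2 then 1 else 2)"
proof -
  have "2*x \<le> n-1 \<longleftrightarrow> x \<le> (n-1) div 2" by presburger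
  then show ?thesis unfolding hh_def by simp
qed

lemma Plt_iff:
  assumes "n \<ge> 4" "1 \<le> b" "b \<le> n-2" "1 \<le> c" "c \<le> n-2"
  shows "Plt 2 (L n) (Q n b) (Q n c) \<longleftrightarrow> b \<le> (n-1) div 2 \<and> (n-1) div 2 < c \<and> c \<le> b + (n-1) div 2"
proof -
  have "Plt 2 (L n) (Q n b) (Q n c) \<longleftrightarrow> b \<le> c \<and> hh n c - hh n b = hh n (c-b) \<and> b \<noteq> c"
  proof -
    have "Q n b = Q n c \<longleftrightarrow> b = c" using Q_inj by blast
    then show ?thesis unfolding Plt_def using Ple_iff[of n b c] assms by simp
  qed
  also have "\<dots> \<longleftrightarrow> b \<le> (n-1) div 2 \<and> (n-1) div 2 < c \<and> c \<le> b + (n-1) div 2"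
  proof -
    define m where "m = (n-1) div 2"
    have hb: "hh n b = (if b \<le> m then 1 else 2)" using assms unfolding hh_alt m_def by simp
    have hc: "hh n c = (if c \<le> m then 1 else 2)" using assms unfolding hh_alt m_def by simp
    have hd: "b < c \<Longrightarrow> hh n (c-b) = (if c - b \<le> m then 1 else 2)" unfolding hh_alt m_def by simp
    show ?thesis unfolding m_def[symmetric] using hb hc hd by (cases "b < c") auto
  qed
  finally show ?thesis .
qed

lemma Pset_eq: assumes "n \<ge> 4" shows "Pset 2 (L n) = Q n ` {0..n-2}"
proof
  show "Pset 2 (L n) \<subseteq> Q n ` {0..n-2}"
  proof
    fix x assume "x \<in> Pset 2 (L n)"
    then obtain b where "b \<le> n-2" "x = Q n b" using in_Pi_iff[OF assms] unfolding Pset_def by blast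
    then show "x \<in> Q n ` {0..n-2}" by simp
  qed
next
  show "Q n ` {0..n-2} \<subseteq> Pset 2 (L n)"
  proof
    fix x assume "x \<in> Q n ` {0..n-2}"
    then obtain b where "b \<le> n-2" "x = Q n b" by auto
    then show "x \<in> Pset 2 (L n)" using in_Pi_iff[OF assms] unfolding Pset_def by blast
  qed
qed

lemma P'_eq: assumes "n \<ge> 4" shows "Pset 2 (L n) - {\<lambda>k. 0} = Q n ` {1..n-2}"
proof -
  have "{0..n-2} = insert 0 {1..n-2}" by auto
  then have "Q n ` {0..n-2} = insert (Q n 0) (Q n ` {1..n-2})" by simp
  moreover have "Q n 0 \<notin> Q n ` {1..n-2}" using Q_inj by fastforce
  ultimately have "Q n ` {0..n-2} - {Q n 0} = Q n ` {1..n-2}" by (simp add: Diff_insert_absorb)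
  then show ?thesis unfolding Pset_eq[OF assms] Q0 .
qed



theorem proposition2p15:
  fixes n :: nat
  assumes "n \<ge> 4"
  defines "lam \<equiv> (\<lambda>k::nat. if k = 1 then int n - 2 else 2)"
  defines "m \<equiv> (n - 1) div 2"
  defines "P' \<equiv> Pset 2 lam - {\<lambda>k. 0}"
  shows "bij_betw (pt 2 lam) {0..n-2} (Pset 2 lam) \<and>
       pt 2 lam 0 = (\<lambda>k. 0) \<and>
       {x \<in> P'. \<not> (\<exists>y\<in>P'. Plt 2 lam y x)} = pt 2 lam ` {1..m} \<and>
       {x \<in> P'. \<not> (\<exists>y\<in>P'. Plt 2 lam x y)} = pt 2 lam ` {m+1..n-2} \<and>
       (\<forall>b\<in>{1..n-2}. \<forall>c\<in>{1..n-2}.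
           Pcovers_in 2 lam P' (pt 2 lam b) (pt 2 lam c) \<longleftrightarrow>
           (\<exists>j\<in>{1..n-2-m}. c = m + j \<and> b \<in> {j..m})) \<and>
       (\<forall>b\<in>{1..n-2}. \<forall>c\<in>{1..n-2}.
           Plt 2 lam (pt 2 lam b) (pt 2 lam c) \<longleftrightarrow>
           Pcovers_in 2 lam P' (pt 2 lam b) (pt 2 lam c))"
proof -
  have lam: "lam = L n" unfolding lam_def L_def ..
  have P': "P' = Q n ` {1..n-2}" unfolding P'_def lam using P'_eq assms(1) .
  have ptQ: "\<And>b. b \<le> n-2 \<Longrightarrow> pt 2 lam b = Q n b" using pt_eq assms(1) unfolding lam by blast
  have m1: "1 \<le> m" "m + 1 \<le> n-2" "n-2 \<le> 2*m" unfolding m_def using assms(1) by presburger+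
  have rel: "\<And>b c. b \<in> {1..n-2} \<Longrightarrow> c \<in> {1..n-2} \<Longrightarrow>
      Plt 2 lam (Q n b) (Q n c) \<longleftrightarrow> b \<le> m \<and> m < c \<and> c \<le> b + m"
    unfolding lam m_def using Plt_iff assms(1) by simp
  have img: "\<And>A. A \<subseteq> {0..n-2} \<Longrightarrow> pt 2 lam ` A = Q n ` A"
    using ptQ by (intro image_cong) auto
  have below: "\<And>c. c \<in> {1..n-2} \<Longrightarrow> (\<exists>y\<in>P'. Plt 2 lam y (Q n c)) \<longleftrightarrow> m < c"
  proof -
    fix c assume c: "c \<in> {1..n-2}"
    show "(\<exists>y\<in>P'. Plt 2 lam y (Q n c)) \<longleftrightarrow> m < c"
    proof
      assume "\<exists>y\<in>P'. Plt 2 lam y (Q n c)"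
      then obtain b where "b \<in> {1..n-2}" "Plt 2 lam (Q n b) (Q n c)" unfolding P' by blast
      then show "m < c" using rel c by blast
    next
      assume mc: "m < c"
      define b where "b = max 1 (c - m)"
      have b: "b \<in> {1..n-2}" "b \<le> m" "c \<le> b + m" using c m1 mc unfolding b_def by auto
      then have "Plt 2 lam (Q n b) (Q n c)" using rel c mc by blast
      moreover have "Q n b \<in> P'" using b unfolding P' by blast
      ultimately show "\<exists>y\<in>P'. Plt 2 lam y (Q n c)" by blast
    qed
  qed
  have above: "\<And>b. b \<in> {1..n-2} \<Longrightarrow> (\<exists>y\<in>P'. Plt 2 lam (Q n b) y) \<longleftrightarrow> b \<le> m"
  proof -
    fix b assume b: "b \<in> {1..n-2}"
    show "(\<exists>y\<in>P'. Plt 2 lam (Q n b) y) \<longleftrightarrow> b \<le> m"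
    proof
      assume "\<exists>y\<in>P'. Plt 2 lam (Q n b) y"
      then obtain c where "c \<in> {1..n-2}" "Plt 2 lam (Q n b) (Q n c)" unfolding P' by blast
      then show "b \<le> m" using rel b by blast
    next
      assume bm: "b \<le> m"
      have c: "m + 1 \<in> {1..n-2}" using m1 by auto
      then have "Plt 2 lam (Q n b) (Q n (m+1))" using rel b bm by auto
      moreover have "Q n (m+1) \<in> P'" using c unfolding P' by blast
      ultimately show "\<exists>y\<in>P'. Plt 2 lam (Q n b) y" by blast
    qed
  qed
  have cov: "\<And>b c. b \<in> {1..n-2} \<Longrightarrow> c \<in> {1..n-2} \<Longrightarrow>
      Pcovers_in 2 lam P' (Q n b) (Q n c) \<longleftrightarrow> Plt 2 lam (Q n b) (Q n c)"
  proof -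
    fix b c assume b: "b \<in> {1..n-2}" and c: "c \<in> {1..n-2}"
    have "\<not> (\<exists>\<tau>\<in>P'. Plt 2 lam (Q n b) \<tau> \<and> Plt 2 lam \<tau> (Q n c))"
    proof
      assume "\<exists>\<tau>\<in>P'. Plt 2 lam (Q n b) \<tau> \<and> Plt 2 lam \<tau> (Q n c)"
      then obtain t where t: "t \<in> {1..n-2}" "Plt 2 lam (Q n b) (Q n t)" "Plt 2 lam (Q n t) (Q n c)"
        unfolding P' by blast
      then show False using rel[OF b t(1)] rel[OF t(1) c] by simp
    qed
    moreover have "Q n b \<in> P'" "Q n c \<in> P'" using b c unfolding P' by blast+
    ultimately show "Pcovers_in 2 lam P' (Q n b) (Q n c) \<longleftrightarrow> Plt 2 lam (Q n b) (Q n c)"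
      unfolding Pcovers_in_def by blast
  qed
  have s1: "bij_betw (pt 2 lam) {0..n-2} (Pset 2 lam)"
  proof -
    have "bij_betw (Q n) {0..n-2} (Pset 2 lam)"
      unfolding bij_betw_def lam using Pset_eq[OF assms(1)] Q_inj by (auto intro: inj_onI)
    then show ?thesis using ptQ by (subst bij_betw_cong[where g="Q n"]) auto
  qed
  have s2: "pt 2 lam 0 = (\<lambda>k. 0)" using ptQ[of 0] Q0 by simp
  have s3: "{x \<in> P'. \<not> (\<exists>y\<in>P'. Plt 2 lam y x)} = pt 2 lam ` {1..m}"
  proof -
    have "{x \<in> P'. \<not> (\<exists>y\<in>P'. Plt 2 lam y x)} = Q n ` {1..m}"
    proof (intro equalityI subsetI)
      fix x assume "x \<in> {x \<in> P'. \<not> (\<exists>y\<in>P'. Plt 2 lam y x)}"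
      then obtain c where "c \<in> {1..n-2}" "x = Q n c" "\<not> (\<exists>y\<in>P'. Plt 2 lam y (Q n c))"
        unfolding P' by blast
      then show "x \<in> Q n ` {1..m}" using below by auto
    next
      fix x assume "x \<in> Q n ` {1..m}"
      then obtain c where c: "c \<in> {1..m}" "x = Q n c" by blast
      then have c': "c \<in> {1..n-2}" using m1 by auto
      then show "x \<in> {x \<in> P'. \<not> (\<exists>y\<in>P'. Plt 2 lam y x)}"
        using below[OF c'] c unfolding P' by auto
    qed
    also have "\<dots> = pt 2 lam ` {1..m}" using m1 by (intro img[symmetric]) auto
    finally show ?thesis .
  qed
  have s4: "{x \<in> P'. \<not> (\<exists>y\<in>P'. Plt 2 lam x y)} = pt 2 lam ` {m+1..n-2}"
  proof -
    have "{x \<in> P'. \<not> (\<exists>y\<in>P'. Plt 2 lam x y)} = Q n ` {m+1..n-2}"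
    proof (intro equalityI subsetI)
      fix x assume "x \<in> {x \<in> P'. \<not> (\<exists>y\<in>P'. Plt 2 lam x y)}"
      then obtain c where "c \<in> {1..n-2}" "x = Q n c" "\<not> (\<exists>y\<in>P'. Plt 2 lam (Q n c) y)"
        unfolding P' by blast
      then show "x \<in> Q n ` {m+1..n-2}" using above by auto
    next
      fix x assume "x \<in> Q n ` {m+1..n-2}"
      then obtain c where c: "c \<in> {m+1..n-2}" "x = Q n c" by blast
      then have c': "c \<in> {1..n-2}" using m1 by auto
      then show "x \<in> {x \<in> P'. \<not> (\<exists>y\<in>P'. Plt 2 lam x y)}"
        using above[OF c'] c unfolding P' by auto
    qed
    also have "\<dots> = pt 2 lam ` {m+1..n-2}" by (intro img[symmetric]) auto
    finally show ?thesis .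
  qed
  have s5: "\<forall>b\<in>{1..n-2}. \<forall>c\<in>{1..n-2}.
           Pcovers_in 2 lam P' (pt 2 lam b) (pt 2 lam c) \<longleftrightarrow>
           (\<exists>j\<in>{1..n-2-m}. c = m + j \<and> b \<in> {j..m})"
  proof (intro ballI)
    fix b c assume b: "b \<in> {1..n-2}" and c: "c \<in> {1..n-2}"
    have "Pcovers_in 2 lam P' (pt 2 lam b) (pt 2 lam c) \<longleftrightarrow> b \<le> m \<and> m < c \<and> c \<le> b + m"
      using ptQ b c cov[OF b c] rel[OF b c] by auto
    also have "\<dots> \<longleftrightarrow> (\<exists>j\<in>{1..n-2-m}. c = m + j \<and> b \<in> {j..m})"
    proof
      assume a: "b \<le> m \<and> m < c \<and> c \<le> b + m"
      then have "c - m \<in> {1..n-2-m} \<and> c = m + (c - m) \<and> b \<in> {c-m..m}" using c by auto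
      then show "\<exists>j\<in>{1..n-2-m}. c = m + j \<and> b \<in> {j..m}" by blast
    qed (auto)
    finally show "Pcovers_in 2 lam P' (pt 2 lam b) (pt 2 lam c) \<longleftrightarrow>
           (\<exists>j\<in>{1..n-2-m}. c = m + j \<and> b \<in> {j..m})" .
  qed
  have s6: "\<forall>b\<in>{1..n-2}. \<forall>c\<in>{1..n-2}.
           Plt 2 lam (pt 2 lam b) (pt 2 lam c) \<longleftrightarrow>
           Pcovers_in 2 lam P' (pt 2 lam b) (pt 2 lam c)"
    using ptQ cov by auto
  show ?thesis using s1 s2 s3 s4 s5 s6 by blast
qed

end
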